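(* In the setting above, let $\omega_I=-\tfrac12 dId\rho$ with $\rho=\rho(\eta_1,\eta_2)$, let $g(\xi_A,\xi_B):=\omega_I(I\xi_A,\xi_B)$, and assume $g$ is non-degenerate. Define the endomorphism $J$ of $T_X\mathcal O$ by $g(\xi_A,\xi_B)=\operatorname{Re}\,\omega_c^{\mathcal O}(J\xi_A,\xi_B)$ for all $A,B$. Then \begin{align*} J\xi_A &= -2\rho_1[X,\sigma\xi_A] + 4\rho_2\big(2[X,[\sigma X,[X,\sigma\xi_A]]]-[X,[X,[\sigma X,\sigma\xi_A]]]\big)\\ &\quad -2\rho_{11}\langle\sigma\xi_A,X\rangle[X,\sigma X]\\ &\quad +4\rho_{12}\big(\langle\sigma\xi_A,[X,[\sigma X,X]]\rangle[X,\sigma X]+\langle\sigma\xi_A,X\rangle[X,[\sigma X,[X,\sigma X]]]\big)\\ &\quad -8\rho_{22}\langle\sigma\xi_A,[X,[\sigma X,X]]\rangle[X,[\sigma X,[X,\sigma X]]]. \end{align*}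
   Context: $\mathfrak g^{\mathbb C}$ is a complex semisimple Lie algebra, $\langle\cdot,\cdot\rangle$ the negative of its Killing form, $\sigma$ a real structure with compact fixed real form $\mathfrak g$. On a nilpotent orbit $\mathcal O$, $\xi_A=[A,X]$ at $X$; tangent vectors are identified with elements of $\mathfrak g^{\mathbb C}$. $I\xi_A=\xi_{iA}$, and $I$ acts on one-forms by $(I\alpha)(Y)=-\alpha(IY)$. The Kirillov–Kostant–Souriau form is $\omega_c^{\mathcal O}(\xi_A,\xi_B)_X=\langle X,[A,B]\rangle=-\langle\xi_A,B\rangle$. The invariants are $\eta_1(X)=\langle X,\sigma X\rangle$, $\eta_2(X)=-\langle[X,\sigma X],[X,\sigma X]\rangle$, and $\rho_i=\partial\rho/\partial\eta_i$, $\rho_{ij}=\partial^2\rho/\partial\eta_i\partial\eta_j$. *)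

theory Defs
  imports "HOL-Analysis.Analysis"
begin

text \<open>The complex Lie algebra is modelled on the complex vector space complex^'n
  (with the standard basis axis i 1), with Lie bracket br.\<close>

type_synonym 'n cvec = "complex ^ 'n"

definition lie_algebra :: "('n::finite cvec \<Rightarrow> 'n cvec \<Rightarrow> 'n cvec) \<Rightarrow> bool" where
  "lie_algebra br \<longleftrightarrow>
     (\<forall>x y z. br (x + y) z = br x z + br y z) \<and>
     (\<forall>x y z. br x (y + z) = br x y + br x z) \<and>
     (\<forall>c x y. br (c *s x) y = c *s br x y) \<and>
     (\<forall>c x y. br x (c *s y) = c *s br x y) \<and>
     (\<forall>x. br x x = 0) \<and>
     (\<forall>x y z. br x (br y z) + br y (br z x) + br z (br x y) = 0)"

definition killing :: "('n::finite cvec \<Rightarrow> 'n cvec \<Rightarrow> 'n cvec) \<Rightarrow> 'n cvec \<Rightarrow> 'n cvec \<Rightarrow> complex" where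
  "killing br A B = (\<Sum>i\<in>UNIV. (br A (br B (axis i 1))) $ i)"

definition ip :: "('n::finite cvec \<Rightarrow> 'n cvec \<Rightarrow> 'n cvec) \<Rightarrow> 'n cvec \<Rightarrow> 'n cvec \<Rightarrow> complex" where
  "ip br A B = - killing br A B"

definition lie_ideal :: "('n::finite cvec \<Rightarrow> 'n cvec \<Rightarrow> 'n cvec) \<Rightarrow> 'n cvec set \<Rightarrow> bool" where
  "lie_ideal br I \<longleftrightarrow> 0 \<in> I \<and> (\<forall>x\<in>I. \<forall>y\<in>I. x + y \<in> I) \<and> (\<forall>c. \<forall>x\<in>I. c *s x \<in> I)
     \<and> (\<forall>x. \<forall>y\<in>I. br x y \<in> I)"

fun derived_series :: "('n::finite cvec \<Rightarrow> 'n cvec \<Rightarrow> 'n cvec) \<Rightarrow> 'n cvec set \<Rightarrow> nat \<Rightarrow> 'n cvec set" where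
  "derived_series br I 0 = I"
| "derived_series br I (Suc k) =
     span {br x y | x y. x \<in> derived_series br I k \<and> y \<in> derived_series br I k}"

definition solvable_ideal :: "('n::finite cvec \<Rightarrow> 'n cvec \<Rightarrow> 'n cvec) \<Rightarrow> 'n cvec set \<Rightarrow> bool" where
  "solvable_ideal br I \<longleftrightarrow> lie_ideal br I \<and> (\<exists>k. derived_series br I k = {0})"

definition semisimple :: "('n::finite cvec \<Rightarrow> 'n cvec \<Rightarrow> 'n cvec) \<Rightarrow> bool" where
  "semisimple br \<longleftrightarrow> lie_algebra br \<and> (\<forall>I. solvable_ideal br I \<longrightarrow> I = {0})"

text \<open>A real structure (conjugate-linear involutive Lie algebra automorphism) whose
  fixed real form is compact, i.e. the Killing form is negative definite on it.\<close>
definition compact_real_structure ::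
  "('n::finite cvec \<Rightarrow> 'n cvec \<Rightarrow> 'n cvec) \<Rightarrow> ('n cvec \<Rightarrow> 'n cvec) \<Rightarrow> bool" where
  "compact_real_structure br \<sigma> \<longleftrightarrow>
     (\<forall>x y. \<sigma> (x + y) = \<sigma> x + \<sigma> y) \<and>
     (\<forall>c x. \<sigma> (c *s x) = cnj c *s \<sigma> x) \<and>
     (\<forall>x. \<sigma> (\<sigma> x) = x) \<and>
     (\<forall>x y. \<sigma> (br x y) = br (\<sigma> x) (\<sigma> y)) \<and>
     (\<forall>A. \<sigma> A = A \<and> A \<noteq> 0 \<longrightarrow> Re (killing br A A) < 0)"

definition nilpotent_elt :: "('n::finite cvec \<Rightarrow> 'n cvec \<Rightarrow> 'n cvec) \<Rightarrow> 'n cvec \<Rightarrow> bool" where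
  "nilpotent_elt br X \<longleftrightarrow> (\<exists>k. (br X ^^ k) = (\<lambda>_. 0))"

text \<open>The invariants (real valued; we take real parts of the complex values).\<close>
definition eta1 :: "('n::finite cvec \<Rightarrow> 'n cvec \<Rightarrow> 'n cvec) \<Rightarrow> ('n cvec \<Rightarrow> 'n cvec) \<Rightarrow> 'n cvec \<Rightarrow> real" where
  "eta1 br \<sigma> X = Re (ip br X (\<sigma> X))"

definition eta2 :: "('n::finite cvec \<Rightarrow> 'n cvec \<Rightarrow> 'n cvec) \<Rightarrow> ('n cvec \<Rightarrow> 'n cvec) \<Rightarrow> 'n cvec \<Rightarrow> real" where
  "eta2 br \<sigma> X = Re (- ip br (br X (\<sigma> X)) (br X (\<sigma> X)))"

text \<open>The one-form I d rho, (I alpha)(Y) = - alpha(i Y), computed on the ambient space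
  (the orbit is a complex submanifold and I is multiplication by i).\<close>
definition Idrho :: "('n::finite cvec \<Rightarrow> 'n cvec \<Rightarrow> 'n cvec) \<Rightarrow> ('n cvec \<Rightarrow> 'n cvec) \<Rightarrow>
    (real \<times> real \<Rightarrow> real) \<Rightarrow> 'n cvec \<Rightarrow> 'n cvec \<Rightarrow> real" where
  "Idrho br \<sigma> \<rho> Y V =
     - frechet_derivative (\<lambda>Z. \<rho> (eta1 br \<sigma> Z, eta2 br \<sigma> Z)) (at Y) (\<i> *s V)"

text \<open>Exterior derivative of a one-form on a vector space:
  d alpha (U,V) = U(alpha(V)) - V(alpha(U)) for constant vector fields U, V.\<close>
definition dform :: "('n::finite cvec \<Rightarrow> 'n cvec \<Rightarrow> real) \<Rightarrow> 'n cvec \<Rightarrow> 'n cvec \<Rightarrow> 'n cvec \<Rightarrow> real" where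
  "dform \<alpha> X U V = frechet_derivative (\<lambda>Y. \<alpha> Y V) (at X) U - frechet_derivative (\<lambda>Y. \<alpha> Y U) (at X) V"

definition omega_I :: "('n::finite cvec \<Rightarrow> 'n cvec \<Rightarrow> 'n cvec) \<Rightarrow> ('n cvec \<Rightarrow> 'n cvec) \<Rightarrow>
    (real \<times> real \<Rightarrow> real) \<Rightarrow> 'n cvec \<Rightarrow> 'n cvec \<Rightarrow> 'n cvec \<Rightarrow> real" where
  "omega_I br \<sigma> \<rho> X U V = - (1/2) * dform (Idrho br \<sigma> \<rho>) X U V"

text \<open>g(xi_A, xi_B) = omega_I(I xi_A, xi_B), with xi_A = [A,X] and I xi_A = xi_{iA}.\<close>
definition gmet :: "('n::finite cvec \<Rightarrow> 'n cvec \<Rightarrow> 'n cvec) \<Rightarrow> ('n cvec \<Rightarrow> 'n cvec) \<Rightarrow>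
    (real \<times> real \<Rightarrow> real) \<Rightarrow> 'n cvec \<Rightarrow> 'n cvec \<Rightarrow> 'n cvec \<Rightarrow> real" where
  "gmet br \<sigma> \<rho> X A B = omega_I br \<sigma> \<rho> X (br (\<i> *s A) X) (br B X)"

text \<open>Kirillov-Kostant-Souriau form: omega_c(xi_A, xi_B)_X = <X,[A,B]>.\<close>
definition kks :: "('n::finite cvec \<Rightarrow> 'n cvec \<Rightarrow> 'n cvec) \<Rightarrow> 'n cvec \<Rightarrow> 'n cvec \<Rightarrow> 'n cvec \<Rightarrow> complex" where
  "kks br X A B = ip br X (br A B)"

end

theory Submission
  imports Defs
begin
locale LA =
  fixes br :: "'n::finite cvec \<Rightarrow> 'n cvec \<Rightarrow> 'n cvec" and \<sigma> :: "'n cvec \<Rightarrow> 'n cvec"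
  assumes la: "lie_algebra br" and cs: "compact_real_structure br \<sigma>"
begin

lemma br_addL: "br (x + y) z = br x z + br y z" using la unfolding lie_algebra_def by blast
lemma br_addR: "br x (y + z) = br x y + br x z" using la unfolding lie_algebra_def by blast
lemma br_scL: "br (c *s x) y = c *s br x y" using la unfolding lie_algebra_def by blast
lemma br_scR: "br x (c *s y) = c *s br x y" using la unfolding lie_algebra_def by blast
lemma br_self: "br x x = 0" using la unfolding lie_algebra_def by blast
lemma jacobi: "br x (br y z) + br y (br z x) + br z (br x y) = 0" using la unfolding lie_algebra_def by blast

lemma br_0L[simp]: "br 0 y = 0" using br_scL[of 0 0 y] by simp
lemma br_0R[simp]: "br x 0 = 0" using br_scR[of x 0 0] by simp
lemma br_negL: "br (- x) y = - br x y" using br_scL[of "-1" x y] by simp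
lemma br_negR: "br x (- y) = - br x y" using br_scR[of x "-1" y] by simp
lemma br_diffL: "br (x - y) z = br x z - br y z" by (simp only: diff_conv_add_uminus br_addL br_negL)
lemma br_diffR: "br x (y - z) = br x y - br x z" by (simp only: diff_conv_add_uminus br_addR br_negR)
lemma br_anti: "br y x = - br x y"
proof -
  have "br (x + y) (x + y) = 0" by (rule br_self)
  hence "br x x + br y x + (br x y + br y y) = 0" by (simp only: br_addL br_addR)
  hence "br y x + br x y = 0" by (simp add: br_self)
  thus ?thesis by (simp add: add_eq_0_iff2)
qed

lemma sg_add: "\<sigma> (x + y) = \<sigma> x + \<sigma> y" using cs unfolding compact_real_structure_def by blast
lemma sg_sc: "\<sigma> (c *s x) = cnj c *s \<sigma> x" using cs unfolding compact_real_structure_def by blast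
lemma sg_sg[simp]: "\<sigma> (\<sigma> x) = x" using cs unfolding compact_real_structure_def by blast
lemma sg_br: "\<sigma> (br x y) = br (\<sigma> x) (\<sigma> y)" using cs unfolding compact_real_structure_def by blast
lemma sg_cpt: "\<sigma> A = A \<Longrightarrow> A \<noteq> 0 \<Longrightarrow> Re (killing br A A) < 0" using cs unfolding compact_real_structure_def by blast
lemma sg_0[simp]: "\<sigma> 0 = 0" using sg_sc[of 0 0] by simp
lemma sg_neg: "\<sigma> (- x) = - \<sigma> x" using sg_sc[of "-1" x] by simp
lemma sg_diff: "\<sigma> (x - y) = \<sigma> x - \<sigma> y" by (simp only: diff_conv_add_uminus sg_add sg_neg)

definition clin :: "('n cvec \<Rightarrow> 'n cvec) \<Rightarrow> bool" where
  "clin f \<longleftrightarrow> (\<forall>x y. f (x + y) = f x + f y) \<and> (\<forall>c x. f (c *s x) = c *s f x)"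

lemma clin_sum: assumes "clin f" shows "f (sum g S) = sum (\<lambda>j. f (g j)) S"
proof (cases "finite S")
  case True
  have f0: "f 0 = 0" using assms unfolding clin_def by (metis vector_smult_lzero)
  from True show ?thesis
    by induct (use assms f0 in \<open>auto simp: clin_def\<close>)
next
  case False
  have "f 0 = 0" using assms unfolding clin_def by (metis vector_smult_lzero)
  with False show ?thesis by simp
qed

lemma clin_exp: assumes "clin f" shows "f v = (\<Sum>j\<in>UNIV. v$j *s f (axis j 1))"
proof -
  have "f v = f (\<Sum>j\<in>UNIV. v$j *s axis j 1)" by (simp add: basis_expansion)
  also have "\<dots> = (\<Sum>j\<in>UNIV. f (v$j *s axis j 1))" by (rule clin_sum[OF assms])
  also have "\<dots> = (\<Sum>j\<in>UNIV. v$j *s f (axis j 1))" using assms by (simp add: clin_def)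
  finally show ?thesis .
qed

definition tr :: "('n cvec \<Rightarrow> 'n cvec) \<Rightarrow> complex" where
  "tr f = (\<Sum>i\<in>UNIV. (f (axis i 1)) $ i)"

lemma tr_comm: assumes "clin f" "clin g" shows "tr (\<lambda>v. f (g v)) = tr (\<lambda>v. g (f v))"
proof -
  have "tr (\<lambda>v. f (g v)) = (\<Sum>i\<in>UNIV. \<Sum>j\<in>UNIV. (g (axis i 1))$j * (f (axis j 1))$i)"
    unfolding tr_def by (subst clin_exp[OF assms(1)]) simp
  also have "\<dots> = (\<Sum>j\<in>UNIV. \<Sum>i\<in>UNIV. (g (axis i 1))$j * (f (axis j 1))$i)"
    by (rule sum.swap)
  also have "\<dots> = tr (\<lambda>v. g (f v))"
    unfolding tr_def by (subst clin_exp[OF assms(2)]) (simp add: mult.commute)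
  finally show ?thesis .
qed

lemma clin_br: "clin (br x)" by (simp add: clin_def br_addR br_scR)
lemma clin_comp: "clin f \<Longrightarrow> clin g \<Longrightarrow> clin (\<lambda>v. f (g v))" by (simp add: clin_def)

lemma killing_tr: "killing br A B = tr (\<lambda>v. br A (br B v))"
  by (simp add: killing_def tr_def)

end

context LA begin

lemma ad_br: "br (br A B) w = br A (br B w) - br B (br A w)"
proof -
  have "br A (br B w) + br B (br w A) + br w (br A B) = 0" by (rule jacobi)
  hence "br A (br B w) + br B (br w A) - br (br A B) w = 0"
    using br_anti[of w "br A B"] by (simp add: algebra_simps)
  hence "br (br A B) w = br A (br B w) + br B (br w A)"
    by (metis eq_iff_diff_eq_0)
  thus ?thesis using br_anti[of A w] by (simp add: br_negR)
qed

lemma tr_diff: "tr (\<lambda>v. f v - g v) = tr f - tr g"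
  by (simp add: tr_def sum_subtractf)

lemma killing_addL: "killing br (x + y) B = killing br x B + killing br y B"
  by (simp add: killing_def br_addL sum.distrib)
lemma killing_addR: "killing br A (x + y) = killing br A x + killing br A y"
  by (simp add: killing_def br_addL br_addR sum.distrib)
lemma killing_scL: "killing br (c *s x) B = c * killing br x B"
  by (simp add: killing_def br_scL sum_distrib_left)
lemma killing_scR: "killing br A (c *s y) = c * killing br A y"
  by (simp add: killing_def br_scL br_scR sum_distrib_left)
lemma killing_sym: "killing br A B = killing br B A"
  unfolding killing_tr by (rule tr_comm[OF clin_br clin_br])
lemma killing_inv: "killing br (br A B) C = killing br A (br B C)"
proof -
  have "killing br (br A B) C = tr (\<lambda>v. br A (br B (br C v))) - tr (\<lambda>v. br B (br A (br C v)))"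
    unfolding killing_tr ad_br by (rule tr_diff)
  moreover have "killing br A (br B C) = tr (\<lambda>v. br A (br B (br C v))) - tr (\<lambda>v. br A (br C (br B v)))"
    unfolding killing_tr ad_br br_diffR by (rule tr_diff)
  moreover have "tr (\<lambda>v. br B (br A (br C v))) = tr (\<lambda>v. br A (br C (br B v)))"
    using tr_comm[OF clin_br[of B] clin_comp[OF clin_br[of A] clin_br[of C]]] by simp
  ultimately show ?thesis by simp
qed

lemma sg_sum: "\<sigma> (sum g S) = sum (\<lambda>j. \<sigma> (g j)) S"
proof (cases "finite S")
  case True thus ?thesis by induct (auto simp: sg_add)
qed simp

lemma sg_exp: "\<sigma> v = (\<Sum>j\<in>UNIV. cnj (v$j) *s \<sigma> (axis j 1))"
proof -
  have "\<sigma> v = \<sigma> (\<Sum>j\<in>UNIV. v$j *s axis j 1)" by (simp add: basis_expansion)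
  also have "\<dots> = (\<Sum>j\<in>UNIV. cnj (v$j) *s \<sigma> (axis j 1))" by (simp add: sg_sum sg_sc)
  finally show ?thesis .
qed

lemma orth: "(\<Sum>i\<in>UNIV. cnj ((\<sigma> (axis i 1))$j) * (\<sigma> (axis l 1))$i) = (if j = l then 1 else 0)"
proof -
  have e: "axis l 1 = (\<Sum>i\<in>UNIV. cnj ((\<sigma> (axis l 1))$i) *s \<sigma> (axis i 1))"
    using sg_exp[of "\<sigma> (axis l 1)"] by (simp only: sg_sg)
  have "(axis l 1 :: 'n cvec)$j = (\<Sum>i\<in>UNIV. cnj ((\<sigma> (axis l 1))$i) *s \<sigma> (axis i 1))$j"
    using e by (rule arg_cong[where f="\<lambda>v. v $ j"])
  also have "\<dots> = (\<Sum>i\<in>UNIV. cnj ((\<sigma> (axis l 1))$i) * (\<sigma> (axis i 1))$j)"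
    by (simp only: sum_component vector_smult_component)
  finally have c: "(axis l 1 :: 'n cvec)$j = (\<Sum>i\<in>UNIV. cnj ((\<sigma> (axis l 1))$i) * (\<sigma> (axis i 1))$j)" .
  have c2: "cnj ((axis l 1 :: 'n cvec)$j) = (\<Sum>i\<in>UNIV. (\<sigma> (axis l 1))$i * cnj ((\<sigma> (axis i 1))$j))"
    unfolding c by (simp only: cnj_sum complex_cnj_mult complex_cnj_cnj)
  have ax: "cnj ((axis l 1 :: 'n cvec)$j) = (if j = l then 1 else 0)" by (simp add: axis_def)
  have "(\<Sum>i\<in>UNIV. (\<sigma> (axis l 1))$i * cnj ((\<sigma> (axis i 1))$j)) = (if j = l then 1 else 0)"
    by (rule trans[OF c2[symmetric] ax])
  thus ?thesis by (simp add: mult.commute)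
qed

lemma tr_sigma: assumes T: "clin T"
  shows "(\<Sum>i\<in>UNIV. (\<sigma> (T (\<sigma> (axis i 1))))$i) = cnj (tr T)"
proof -
  let ?M = "\<lambda>i. \<sigma> (axis i 1 :: 'n cvec)"
  have "(\<Sum>i\<in>UNIV. (\<sigma> (T (?M i)))$i)
     = (\<Sum>i\<in>UNIV. \<Sum>j\<in>UNIV. \<Sum>l\<in>UNIV. cnj ((?M i)$j) * (cnj ((T (axis j 1))$l) * (?M l)$i))"
  proof (rule sum.cong[OF refl])
    fix i
    have "\<sigma> (T (?M i)) = \<sigma> (\<Sum>j\<in>UNIV. (?M i)$j *s T (axis j 1))" by (subst clin_exp[OF T]) simp
    also have "\<dots> = (\<Sum>j\<in>UNIV. cnj ((?M i)$j) *s \<sigma> (T (axis j 1)))" by (simp add: sg_sum sg_sc)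
    also have "\<dots> = (\<Sum>j\<in>UNIV. cnj ((?M i)$j) *s (\<Sum>l\<in>UNIV. cnj ((T (axis j 1))$l) *s ?M l))"
      by (subst sg_exp) simp
    finally show "(\<sigma> (T (?M i)))$i = (\<Sum>j\<in>UNIV. \<Sum>l\<in>UNIV. cnj ((?M i)$j) * (cnj ((T (axis j 1))$l) * (?M l)$i))"
      by (simp add: sum_distrib_left)
  qed
  also have "\<dots> = (\<Sum>j\<in>UNIV. \<Sum>i\<in>UNIV. \<Sum>l\<in>UNIV. cnj ((?M i)$j) * (cnj ((T (axis j 1))$l) * (?M l)$i))"
    by (rule sum.swap)
  also have "\<dots> = (\<Sum>j\<in>UNIV. \<Sum>l\<in>UNIV. \<Sum>i\<in>UNIV. cnj ((?M i)$j) * (cnj ((T (axis j 1))$l) * (?M l)$i))"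
    by (rule sum.cong[OF refl], rule sum.swap)
  also have "\<dots> = (\<Sum>j\<in>UNIV. \<Sum>l\<in>UNIV. cnj ((T (axis j 1))$l) * (\<Sum>i\<in>UNIV. cnj ((?M i)$j) * (?M l)$i))"
    by (simp add: sum_distrib_left mult.left_commute)
  also have "\<dots> = (\<Sum>j\<in>UNIV. \<Sum>l\<in>UNIV. cnj ((T (axis j 1))$l) * (if j = l then 1 else 0))"
    by (simp only: orth)
  also have "\<dots> = (\<Sum>j\<in>UNIV. cnj ((T (axis j 1))$j))"
    by (simp add: if_distrib cong: if_cong)
  also have "\<dots> = cnj (tr T)" by (simp add: tr_def)
  finally show ?thesis .
qed

lemma killing_sigma: "killing br (\<sigma> A) (\<sigma> B) = cnj (killing br A B)"
proof -
  have "killing br (\<sigma> A) (\<sigma> B) = (\<Sum>i\<in>UNIV. (\<sigma> (br A (br B (\<sigma> (axis i 1)))))$i)"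
    unfolding killing_def by (simp add: sg_br)
  also have "\<dots> = cnj (killing br A B)"
    unfolding killing_tr by (rule tr_sigma[OF clin_comp[OF clin_br clin_br]])
  finally show ?thesis .
qed

lemma ip_addL: "ip br (x + y) B = ip br x B + ip br y B" by (simp add: ip_def killing_addL)
lemma ip_addR: "ip br A (x + y) = ip br A x + ip br A y" by (simp add: ip_def killing_addR)
lemma ip_scL: "ip br (c *s x) B = c * ip br x B" by (simp add: ip_def killing_scL)
lemma ip_scR: "ip br A (c *s y) = c * ip br A y" by (simp add: ip_def killing_scR)
lemma ip_sym: "ip br A B = ip br B A" by (simp add: ip_def killing_sym)
lemma ip_inv: "ip br (br A B) C = ip br A (br B C)" by (simp add: ip_def killing_inv)
lemma ip_sigma: "ip br (\<sigma> A) (\<sigma> B) = cnj (ip br A B)" by (simp add: ip_def killing_sigma)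
lemma ip_0L[simp]: "ip br 0 B = 0" using ip_scL[of 0 0 B] by simp
lemma ip_0R[simp]: "ip br A 0 = 0" using ip_scR[of A 0 0] by simp
lemma ip_negL: "ip br (- x) B = - ip br x B" using ip_scL[of "-1" x B] by simp
lemma ip_negR: "ip br A (- y) = - ip br A y" using ip_scR[of A "-1" y] by simp
lemma ip_diffL: "ip br (x - y) B = ip br x B - ip br y B" by (simp only: diff_conv_add_uminus ip_addL ip_negL)
lemma ip_diffR: "ip br A (x - y) = ip br A x - ip br A y" by (simp only: diff_conv_add_uminus ip_addR ip_negR)

lemma ip_pos_real: "\<sigma> A = A \<Longrightarrow> A \<noteq> 0 \<Longrightarrow> Re (ip br A A) > 0"
  using sg_cpt by (simp add: ip_def)

lemma ip_pos: assumes "Z \<noteq> 0" shows "Re (ip br Z (\<sigma> Z)) > 0"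
proof -
  define A where "A = (1/2 :: complex) *s (Z + \<sigma> Z)"
  define B where "B = (- \<i>/2) *s (Z - \<sigma> Z)"
  have sA: "\<sigma> A = A" unfolding A_def by (simp add: sg_sc sg_add vec_eq_iff)
  have sB: "\<sigma> B = B" unfolding B_def by (simp add: sg_sc sg_diff vec_eq_iff algebra_simps)
  have Z: "Z = A + \<i> *s B" unfolding A_def B_def by (simp add: vec_eq_iff algebra_simps)
  have sZ: "\<sigma> Z = A - \<i> *s B" by (subst Z) (simp add: sg_add sg_sc sA sB vec_eq_iff)
  have e1: "ip br Z (\<sigma> Z) = ip br A A - \<i> * ip br A B + (\<i> * ip br B A - \<i> * (\<i> * ip br B B))"
    unfolding sZ by (subst Z) (simp add: ip_addL ip_diffR ip_scL ip_scR algebra_simps)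
  have "ip br Z (\<sigma> Z) = ip br A A + ip br B B"
    unfolding e1 ip_sym[of B A] by (simp add: algebra_simps)
  moreover have "A \<noteq> 0 \<or> B \<noteq> 0" using assms Z by auto
  moreover have "Re (ip br A A) \<ge> 0" using ip_pos_real[OF sA] by (cases "A = 0") auto
  moreover have "Re (ip br B B) \<ge> 0" using ip_pos_real[OF sB] by (cases "B = 0") auto
  ultimately show ?thesis using ip_pos_real[OF sA] ip_pos_real[OF sB] by force
qed

lemma ip_nondeg: assumes "\<And>B. Re (ip br D B) = 0" shows "D = 0"
  using assms[of "\<sigma> D"] ip_pos[of D] by force

end

context LA begin

lemma scaleR_sc: "(r::real) *\<^sub>R (v::'n cvec) = complex_of_real r *s v"
  unfolding vec_eq_iff by (simp add: scaleR_conv_of_real[where 'a=complex])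

lemma lin_sg: "linear \<sigma>" by (rule linearI) (simp_all add: sg_add scaleR_sc sg_sc)
lemma bl_sg: "bounded_linear \<sigma>" using lin_sg linear_conv_bounded_linear by blast

lemma bb_br: "bounded_bilinear br"
proof -
  have "bilinear br" unfolding bilinear_def
    by (auto intro!: linearI simp: br_addL br_addR scaleR_sc br_scL br_scR)
  thus ?thesis using bilinear_conv_bounded_bilinear by blast
qed

lemma bb_ip: "bounded_bilinear (ip br)"
proof -
  have "bilinear (ip br)" unfolding bilinear_def
    by (auto intro!: linearI simp: ip_addL ip_addR scaleR_sc ip_scL ip_scR scaleR_conv_of_real)
  thus ?thesis using bilinear_conv_bounded_bilinear by blast
qed

lemma hd_eq: "(f has_derivative f') F \<Longrightarrow> (\<And>h. f' h = g' h) \<Longrightarrow> (f has_derivative g') F"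
  by (metis ext)

lemma d_sg: "(\<sigma> has_derivative \<sigma>) F"
  using bounded_linear.has_derivative[OF bl_sg has_derivative_ident] by simp

definition D1 where "D1 Z h = 2 * Re (ip br h (\<sigma> Z))"
definition WW where "WW Z = br Z (\<sigma> Z)"
definition D2 where "D2 Z h = -4 * Re (ip br h (br (\<sigma> Z) (WW Z)))"

lemma re_conj_swap: "Re (ip br Z (\<sigma> h)) = Re (ip br h (\<sigma> Z))"
proof -
  have "ip br Z (\<sigma> h) = cnj (ip br (\<sigma> Z) h)" using ip_sigma[of "\<sigma> Z" h] by simp
  thus ?thesis by (simp add: ip_sym)
qed

lemma d_eta1: "(eta1 br \<sigma> has_derivative D1 Z) (at Z)"
proof -
  have "((\<lambda>Z. ip br Z (\<sigma> Z)) has_derivative (\<lambda>h. ip br Z (\<sigma> h) + ip br h (\<sigma> Z))) (at Z)"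
    by (rule bounded_bilinear.FDERIV[OF bb_ip has_derivative_ident d_sg])
  from bounded_linear.has_derivative[OF bounded_linear_Re this]
  show ?thesis unfolding eta1_def[abs_def]
    by (rule hd_eq) (simp add: D1_def re_conj_swap)
qed

lemma re_W: "Re (ip br (br Z (\<sigma> h)) (WW Z)) = Re (ip br (br h (\<sigma> Z)) (WW Z))"
proof -
  have "cnj (ip br (br Z (\<sigma> h)) (WW Z)) = ip br (br (\<sigma> Z) h) (br (\<sigma> Z) Z)"
    by (simp add: ip_sigma[symmetric] sg_br WW_def)
  also have "\<dots> = ip br (br h (\<sigma> Z)) (WW Z)"
    by (simp add: WW_def br_anti[of "\<sigma> Z" h] br_anti[of "\<sigma> Z" Z] ip_negL ip_negR)
  finally have e: "cnj (ip br (br Z (\<sigma> h)) (WW Z)) = ip br (br h (\<sigma> Z)) (WW Z)" .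
  have "Re (ip br (br Z (\<sigma> h)) (WW Z)) = Re (cnj (ip br (br Z (\<sigma> h)) (WW Z)))" by simp
  also have "\<dots> = Re (ip br (br h (\<sigma> Z)) (WW Z))" by (simp only: e)
  finally show ?thesis .
qed

lemma d_WW: "(WW has_derivative (\<lambda>h. br Z (\<sigma> h) + br h (\<sigma> Z))) (at Z)"
  unfolding WW_def[abs_def] by (rule bounded_bilinear.FDERIV[OF bb_br has_derivative_ident d_sg])

lemma d_eta2a: "((\<lambda>Z. ip br (WW Z) (WW Z)) has_derivative
     (\<lambda>h. ip br (WW Z) (br Z (\<sigma> h) + br h (\<sigma> Z)) + ip br (br Z (\<sigma> h) + br h (\<sigma> Z)) (WW Z))) (at Z)"
  by (rule bounded_bilinear.FDERIV[OF bb_ip d_WW d_WW])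

lemma d_eta2: "(eta2 br \<sigma> has_derivative D2 Z) (at Z)"
proof -
  have eq: "eta2 br \<sigma> = (\<lambda>x. Re (- ip br (WW x) (WW x)))" by (simp add: eta2_def WW_def fun_eq_iff)
  show ?thesis unfolding eq
  proof (rule hd_eq[OF bounded_linear.has_derivative[OF bounded_linear_Re has_derivative_minus[OF d_eta2a]]])
    fix h
    show "Re (- (ip br (WW Z) (br Z (\<sigma> h) + br h (\<sigma> Z)) + ip br (br Z (\<sigma> h) + br h (\<sigma> Z)) (WW Z))) = D2 Z h"
      using re_W[of Z h]
      by (simp add: D2_def ip_addL ip_addR ip_sym[of "WW Z"] ip_inv)
  qed
qed

end

context LA begin

abbreviation pp where "pp Z \<equiv> (eta1 br \<sigma> Z, eta2 br \<sigma> Z)"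

lemma d_p: "((\<lambda>Z. pp Z) has_derivative (\<lambda>h. (D1 Z h, D2 Z h))) (at Z)"
  by (rule has_derivative_Pair[OF d_eta1 d_eta2])

lemma d_comp:
  assumes "(f has_derivative (\<lambda>(h, k). a * h + b * k)) (at (pp Z))"
  shows "((\<lambda>Z. f (pp Z)) has_derivative (\<lambda>h. a * D1 Z h + b * D2 Z h)) (at Z)"
proof -
  show ?thesis using diff_chain_at[OF d_p assms] unfolding o_def by (rule hd_eq) simp
qed

lemma Idrho_eq:
  assumes "(\<rho> has_derivative (\<lambda>(h, k). a * h + b * k)) (at (pp Y))"
  shows "Idrho br \<sigma> \<rho> Y V = - (a * D1 Y (\<i> *s V) + b * D2 Y (\<i> *s V))"
  unfolding Idrho_def using frechet_derivative_at[OF d_comp[OF assms]] by metis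

lemma d_D1a: "((\<lambda>Y. ip br P (\<sigma> Y)) has_derivative (\<lambda>h. ip br P (\<sigma> h) + ip br 0 (\<sigma> X))) (at X)"
    by (rule bounded_bilinear.FDERIV[OF bb_ip has_derivative_const d_sg])
lemma d_D1b: "((\<lambda>Y. Re (ip br P (\<sigma> Y))) has_derivative (\<lambda>h. Re (ip br P (\<sigma> h)))) (at X)"
  using bounded_linear.has_derivative[OF bounded_linear_Re d_D1a] by (rule hd_eq) simp
lemma d_D1: "((\<lambda>Y. D1 Y P) has_derivative (\<lambda>U. D1 U P)) (at X)"
  using has_derivative_mult_right[OF d_D1b, of 2] unfolding D1_def .

definition DD2 where "DD2 Y P U = -4 * Re (ip br P (br (\<sigma> Y) (br Y (\<sigma> U) + br U (\<sigma> Y)) + br (\<sigma> U) (WW Y)))"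

lemma d_D2a: "((\<lambda>Y. br (\<sigma> Y) (WW Y)) has_derivative (\<lambda>h. br (\<sigma> X) (br X (\<sigma> h) + br h (\<sigma> X)) + br (\<sigma> h) (WW X))) (at X)"
  by (rule bounded_bilinear.FDERIV[OF bb_br d_sg d_WW])
lemma d_D2b: "((\<lambda>Y. ip br P (br (\<sigma> Y) (WW Y))) has_derivative (\<lambda>h. ip br P (br (\<sigma> X) (br X (\<sigma> h) + br h (\<sigma> X)) + br (\<sigma> h) (WW X)) + ip br 0 (br (\<sigma> X) (WW X)))) (at X)"
  by (rule bounded_bilinear.FDERIV[OF bb_ip has_derivative_const d_D2a])
lemma d_D2c: "((\<lambda>Y. Re (ip br P (br (\<sigma> Y) (WW Y)))) has_derivative (\<lambda>h. Re (ip br P (br (\<sigma> X) (br X (\<sigma> h) + br h (\<sigma> X)) + br (\<sigma> h) (WW X))))) (at X)"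
  using bounded_linear.has_derivative[OF bounded_linear_Re d_D2b] by (rule hd_eq) simp
lemma d_D2: "((\<lambda>Y. D2 Y P) has_derivative (\<lambda>U. DD2 X P U)) (at X)"
  using has_derivative_mult_right[OF d_D2c, of "-4"] unfolding D2_def DD2_def .

definition Gd where "Gd X r1 r2 r11 r12 r22 V U =
  - ((r1 * D1 U (\<i> *s V) + (r11 * D1 X U + r12 * D2 X U) * D1 X (\<i> *s V))
   + (r2 * DD2 X (\<i> *s V) U + (r12 * D1 X U + r22 * D2 X U) * D2 X (\<i> *s V)))"

lemma gmet_formula:
  fixes \<rho> \<rho>1 \<rho>2 \<rho>11 \<rho>12 \<rho>22 :: "real \<times> real \<Rightarrow> real"
  assumes \<Omega>: "open \<Omega>" "pp X \<in> \<Omega>"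
    and d\<rho>: "\<And>p. p \<in> \<Omega> \<Longrightarrow> (\<rho> has_derivative (\<lambda>(h, k). \<rho>1 p * h + \<rho>2 p * k)) (at p)"
    and d\<rho>1: "\<And>p. p \<in> \<Omega> \<Longrightarrow> (\<rho>1 has_derivative (\<lambda>(h, k). \<rho>11 p * h + \<rho>12 p * k)) (at p)"
    and d\<rho>2: "\<And>p. p \<in> \<Omega> \<Longrightarrow> (\<rho>2 has_derivative (\<lambda>(h, k). \<rho>12 p * h + \<rho>22 p * k)) (at p)"
  shows "gmet br \<sigma> \<rho> X A B = - (1/2) *
     (Gd X (\<rho>1 (pp X)) (\<rho>2 (pp X)) (\<rho>11 (pp X)) (\<rho>12 (pp X)) (\<rho>22 (pp X)) (br B X) (br (\<i> *s A) X)
    - Gd X (\<rho>1 (pp X)) (\<rho>2 (pp X)) (\<rho>11 (pp X)) (\<rho>12 (pp X)) (\<rho>22 (pp X)) (br (\<i> *s A) X) (br B X))"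
proof -
  define N where "N = (\<lambda>Z. pp Z) -` \<Omega>"
  have oN: "open N" unfolding N_def
    by (rule continuous_open_vimage[OF \<Omega>(1)]) (rule has_derivative_continuous[OF d_p])
  have XN: "X \<in> N" using \<Omega>(2) by (simp add: N_def)
  have fd: "frechet_derivative (\<lambda>Y. Idrho br \<sigma> \<rho> Y V) (at X) =
     Gd X (\<rho>1 (pp X)) (\<rho>2 (pp X)) (\<rho>11 (pp X)) (\<rho>12 (pp X)) (\<rho>22 (pp X)) V" for V
  proof -
    have h1: "((\<lambda>Y. \<rho>1 (pp Y)) has_derivative (\<lambda>h. \<rho>11 (pp X) * D1 X h + \<rho>12 (pp X) * D2 X h)) (at X)"
      by (rule d_comp[OF d\<rho>1[OF \<Omega>(2)]])
    have h2: "((\<lambda>Y. \<rho>2 (pp Y)) has_derivative (\<lambda>h. \<rho>12 (pp X) * D1 X h + \<rho>22 (pp X) * D2 X h)) (at X)"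
      by (rule d_comp[OF d\<rho>2[OF \<Omega>(2)]])
    have G: "((\<lambda>Y. - (\<rho>1 (pp Y) * D1 Y (\<i> *s V) + \<rho>2 (pp Y) * D2 Y (\<i> *s V))) has_derivative
       Gd X (\<rho>1 (pp X)) (\<rho>2 (pp X)) (\<rho>11 (pp X)) (\<rho>12 (pp X)) (\<rho>22 (pp X)) V) (at X)"
      unfolding Gd_def
      by (rule has_derivative_minus[OF has_derivative_add[OF has_derivative_mult[OF h1 d_D1] has_derivative_mult[OF h2 d_D2]]])
    have "((\<lambda>Y. Idrho br \<sigma> \<rho> Y V) has_derivative
       Gd X (\<rho>1 (pp X)) (\<rho>2 (pp X)) (\<rho>11 (pp X)) (\<rho>12 (pp X)) (\<rho>22 (pp X)) V) (at X)"
    proof (rule has_derivative_transform_within_open[OF G oN XN])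
      fix Y assume "Y \<in> N"
      hence "pp Y \<in> \<Omega>" by (simp add: N_def)
      thus "- (\<rho>1 (pp Y) * D1 Y (\<i> *s V) + \<rho>2 (pp Y) * D2 Y (\<i> *s V)) = Idrho br \<sigma> \<rho> Y V"
        using Idrho_eq[OF d\<rho>] by simp
    qed
    thus ?thesis using frechet_derivative_at by metis
  qed
  show ?thesis unfolding gmet_def omega_I_def dform_def fd ..
qed

end

context LA begin

abbreviation NN where "NN X \<equiv> br (\<sigma> X) (WW X)"

lemma L1: "D1 X (\<i> *s a) = -2 * Im (ip br a (\<sigma> X))" by (simp add: D1_def ip_scL ip_negL)
lemma L3: "D1 X V = 2 * Re (ip br V (\<sigma> X))" by (simp add: D1_def)
lemma L4: "D1 X (\<i> *s (\<i> *s a)) = -2 * Re (ip br a (\<sigma> X))" by (simp add: D1_def ip_scL ip_negL)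
lemma L5: "D1 (\<i> *s a) (\<i> *s V) = 2 * Re (ip br (\<sigma> a) V)"
  by (simp add: D1_def ip_scL ip_scR sg_sc ip_sym[of V] ip_negL)
lemma L6: "D1 V (\<i> *s (\<i> *s a)) = -2 * Re (ip br (\<sigma> a) V)"
proof -
  have "ip br (\<sigma> a) V = cnj (ip br a (\<sigma> V))" using ip_sigma[of a "\<sigma> V"] by simp
  thus ?thesis by (simp add: D1_def ip_scL ip_negL)
qed
lemma L7: "D2 X (\<i> *s a) = 4 * Im (ip br a (NN X))" by (simp add: D2_def ip_scL ip_negL)
lemma L9: "D2 X V = -4 * Re (ip br V (NN X))" by (simp add: D2_def)
lemma L10: "D2 X (\<i> *s (\<i> *s a)) = 4 * Re (ip br a (NN X))" by (simp add: D2_def ip_scL ip_negL)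

lemma L11: "DD2 X (\<i> *s V) (\<i> *s a) = -4 * Re (ip br V (br (\<sigma> X) (br X (\<sigma> a))) - ip br V (br (\<sigma> X) (br a (\<sigma> X))) + ip br V (br (\<sigma> a) (WW X)))"
proof -
  have "ip br (\<i> *s V) (br (\<sigma> X) (br X (\<sigma> (\<i> *s a)) + br (\<i> *s a) (\<sigma> X)) + br (\<sigma> (\<i> *s a)) (WW X))
    = ip br V (br (\<sigma> X) (br X (\<sigma> a))) - ip br V (br (\<sigma> X) (br a (\<sigma> X))) + ip br V (br (\<sigma> a) (WW X))"
    by (simp only: sg_sc br_scL br_scR br_addR ip_addR ip_scL ip_scR complex_cnj_i) (simp add: algebra_simps)
  thus ?thesis unfolding DD2_def by simp
qed

lemma L12: "DD2 X (\<i> *s (\<i> *s a)) V = 4 * Re (ip br a (br (\<sigma> X) (br X (\<sigma> V))) + ip br a (br (\<sigma> X) (br V (\<sigma> X))) + ip br a (br (\<sigma> V) (WW X)))"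
proof -
  have "ip br (\<i> *s (\<i> *s a)) (br (\<sigma> X) (br X (\<sigma> V) + br V (\<sigma> X)) + br (\<sigma> V) (WW X))
    = - (ip br a (br (\<sigma> X) (br X (\<sigma> V))) + ip br a (br (\<sigma> X) (br V (\<sigma> X))) + ip br a (br (\<sigma> V) (WW X)))"
    by (simp only: br_addR ip_addR ip_scL) (simp add: algebra_simps)
  thus ?thesis unfolding DD2_def by simp
qed

lemma ip_invR: "ip br P (br y Z) = ip br (br P y) Z" by (simp add: ip_inv)

lemma C1: "Re (ip br a (br (\<sigma> X) (br X (\<sigma> V)))) = Re (ip br V (br (\<sigma> X) (br X (\<sigma> a))))"
proof -
  have "cnj (ip br a (br (\<sigma> X) (br X (\<sigma> V)))) = ip br (\<sigma> a) (br X (br (\<sigma> X) V))"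
    by (simp add: ip_sigma[symmetric] sg_br)
  also have "\<dots> = ip br (br (br (\<sigma> a) X) (\<sigma> X)) V" by (simp add: ip_inv)
  also have "br (br (\<sigma> a) X) (\<sigma> X) = br (\<sigma> X) (br X (\<sigma> a))"
    by (simp add: br_anti[of "\<sigma> a" X] br_negL br_anti[of "\<sigma> X" "br X (\<sigma> a)"])
  finally have e: "cnj (ip br a (br (\<sigma> X) (br X (\<sigma> V)))) = ip br V (br (\<sigma> X) (br X (\<sigma> a)))"
    by (simp add: ip_sym)
  have "Re (ip br a (br (\<sigma> X) (br X (\<sigma> V)))) = Re (cnj (ip br a (br (\<sigma> X) (br X (\<sigma> V)))))" by simp
  also have "\<dots> = Re (ip br V (br (\<sigma> X) (br X (\<sigma> a))))" by (simp only: e)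
  finally show ?thesis .
qed

lemma C2: "ip br a (br (\<sigma> X) (br V (\<sigma> X))) = ip br V (br (\<sigma> X) (br a (\<sigma> X)))"
proof -
  have "ip br a (br (\<sigma> X) (br V (\<sigma> X))) = ip br (br a (\<sigma> X)) (br V (\<sigma> X))" by (simp add: ip_inv)
  also have "\<dots> = ip br (br V (\<sigma> X)) (br a (\<sigma> X))" by (rule ip_sym)
  also have "\<dots> = ip br V (br (\<sigma> X) (br a (\<sigma> X)))" by (simp add: ip_inv)
  finally show ?thesis .
qed

lemma C3: "Re (ip br a (br (\<sigma> V) (WW X))) = Re (ip br V (br (\<sigma> a) (WW X)))"
proof -
  have "cnj (ip br a (br (\<sigma> V) (WW X))) = ip br (\<sigma> a) (br V (br (\<sigma> X) X))"
    by (simp add: ip_sigma[symmetric] sg_br WW_def)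
  also have "\<dots> = ip br (br (\<sigma> a) V) (br (\<sigma> X) X)" by (simp add: ip_inv)
  also have "\<dots> = ip br (br V (\<sigma> a)) (WW X)"
    by (simp add: WW_def br_anti[of "\<sigma> a" V] br_anti[of "\<sigma> X" X] ip_negL ip_negR)
  also have "\<dots> = ip br V (br (\<sigma> a) (WW X))" by (simp add: ip_inv)
  finally have e: "cnj (ip br a (br (\<sigma> V) (WW X))) = ip br V (br (\<sigma> a) (WW X))" .
  have "Re (ip br a (br (\<sigma> V) (WW X))) = Re (cnj (ip br a (br (\<sigma> V) (WW X))))" by simp
  also have "\<dots> = Re (ip br V (br (\<sigma> a) (WW X)))" by (simp only: e)
  finally show ?thesis .
qed

end

lemma arith_id:
  fixes a1 b1 a2 b2 p1 q1 q2 r :: complex and r1 r2 r11 r12 r22 :: real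
  shows "-(1/2) * ((-((r1*(2*Re p1) + (r11*(-2*Im a1) + r12*(4*Im a2))*(-2*Im b1)) + (r2*(-4*Re(q2 - r + q1)) + (r12*(-2*Im a1) + r22*(4*Im a2))*(4*Im b2))))
     - (-((r1*(-2*Re p1) + (r11*(2*Re b1) + r12*(-4*Re b2))*(-2*Re a1)) + (r2*(4*Re(q2 + r + q1)) + (r12*(2*Re b1) + r22*(-4*Re b2))*(4*Re a2)))))
   = - Re (complex_of_real (-2*r1) * p1 + complex_of_real (4*r2) * (2 * q2 - (q2 - q1))
       - complex_of_real (2*r11) * cnj a1 * b1 + complex_of_real (4*r12) * (cnj a2 * b1 + cnj a1 * b2)
       - complex_of_real (8*r22) * cnj a2 * b2)"
  by (simp add: algebra_simps)

context LA begin

lemma lhs_alg: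
  fixes r1 r2 r11 r12 r22 :: real
  shows "-(1/2) * (Gd X r1 r2 r11 r12 r22 V (\<i> *s a) - Gd X r1 r2 r11 r12 r22 (\<i> *s a) V)
   = - Re (complex_of_real (-2*r1) * ip br (\<sigma> a) V
       + complex_of_real (4*r2) * (2 * ip br V (br (\<sigma> X) (br X (\<sigma> a))) - (ip br V (br (\<sigma> X) (br X (\<sigma> a))) - ip br V (br (\<sigma> a) (WW X))))
       - complex_of_real (2*r11) * cnj (ip br a (\<sigma> X)) * ip br V (\<sigma> X)
       + complex_of_real (4*r12) * (cnj (ip br a (NN X)) * ip br V (\<sigma> X) + cnj (ip br a (\<sigma> X)) * ip br V (NN X))
       - complex_of_real (8*r22) * cnj (ip br a (NN X)) * ip br V (NN X))"
proof -
  have e12: "DD2 X (\<i> *s (\<i> *s a)) V = 4 * Re (ip br V (br (\<sigma> X) (br X (\<sigma> a))) + ip br V (br (\<sigma> X) (br a (\<sigma> X))) + ip br V (br (\<sigma> a) (WW X)))"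
    unfolding L12 by (simp add: C1 C2 C3)
  show ?thesis
    by (simp only: Gd_def L1[of X a] L1[of X V] L4[of X a] L5 L6[of V a] L7[of X a] L7[of X V] L10[of X a] L11 e12 L3[of X V] L9[of X V])
       (rule arith_id)
qed

end

context LA begin

lemma T0: "ip br (br X Y) B = ip br Y (br B X)"
proof -
  have "ip br (br X Y) B = - ip br (br Y X) B" by (simp add: br_anti[of Y X] ip_negL)
  also have "\<dots> = - ip br Y (br X B)" by (simp add: ip_inv)
  also have "\<dots> = ip br Y (br B X)" by (simp add: br_anti[of B X] ip_negR)
  finally show ?thesis .
qed

lemma K1: "ip br (\<sigma> a) X = cnj (ip br a (\<sigma> X))"
  using ip_sigma[of a "\<sigma> X"] by simp
lemma K2: "ip br (\<sigma> a) (br X (br (\<sigma> X) X)) = cnj (ip br a (NN X))"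
  using ip_sigma[of a "NN X"] by (simp add: sg_br WW_def)
lemma K3: "ip br (\<sigma> X) V = ip br V (\<sigma> X)" by (rule ip_sym)
lemma K4: "ip br (br (\<sigma> X) (br X (\<sigma> X))) V = ip br V (NN X)" by (simp add: ip_sym WW_def)
lemma K5: "ip br (br (\<sigma> X) (br X (\<sigma> a))) V = ip br V (br (\<sigma> X) (br X (\<sigma> a)))" by (rule ip_sym)
lemma K6: "ip br (br X (br (\<sigma> X) (\<sigma> a))) V
   = ip br V (br (\<sigma> X) (br X (\<sigma> a))) - ip br V (br (\<sigma> a) (WW X))"
proof -
  have j: "br X (br (\<sigma> X) (\<sigma> a)) + br (\<sigma> X) (br (\<sigma> a) X) + br (\<sigma> a) (br X (\<sigma> X)) = 0" by (rule jacobi)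
  have "br X (br (\<sigma> X) (\<sigma> a)) = - br (\<sigma> X) (br (\<sigma> a) X) - br (\<sigma> a) (br X (\<sigma> X))"
    using j by (simp add: algebra_simps eq_neg_iff_add_eq_0)
  also have "\<dots> = br (\<sigma> X) (br X (\<sigma> a)) - br (\<sigma> a) (WW X)"
    by (simp add: WW_def br_anti[of X "\<sigma> a"] br_negR)
  finally have e: "br X (br (\<sigma> X) (\<sigma> a)) = br (\<sigma> X) (br X (\<sigma> a)) - br (\<sigma> a) (WW X)" .
  show ?thesis unfolding e by (simp add: ip_diffL ip_diffR ip_sym)
qed

lemma rhs_alg:
  fixes r1 r2 r11 r12 r22 :: real
  shows "ip br (complex_of_real (- 2 * r1) *s br X (\<sigma> a)
     + complex_of_real (4 * r2) *s (2 *s br X (br (\<sigma> X) (br X (\<sigma> a))) - br X (br X (br (\<sigma> X) (\<sigma> a))))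
     - (complex_of_real (2 * r11) * ip br (\<sigma> a) X) *s br X (\<sigma> X)
     + complex_of_real (4 * r12) *s
         (ip br (\<sigma> a) (br X (br (\<sigma> X) X)) *s br X (\<sigma> X) + ip br (\<sigma> a) X *s br X (br (\<sigma> X) (br X (\<sigma> X))))
     - (complex_of_real (8 * r22) * ip br (\<sigma> a) (br X (br (\<sigma> X) X))) *s br X (br (\<sigma> X) (br X (\<sigma> X)))) B
   = complex_of_real (-2*r1) * ip br (\<sigma> a) (br B X)
       + complex_of_real (4*r2) * (2 * ip br (br B X) (br (\<sigma> X) (br X (\<sigma> a))) - (ip br (br B X) (br (\<sigma> X) (br X (\<sigma> a))) - ip br (br B X) (br (\<sigma> a) (WW X))))
       - complex_of_real (2*r11) * cnj (ip br a (\<sigma> X)) * ip br (br B X) (\<sigma> X)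
       + complex_of_real (4*r12) * (cnj (ip br a (NN X)) * ip br (br B X) (\<sigma> X) + cnj (ip br a (\<sigma> X)) * ip br (br B X) (NN X))
       - complex_of_real (8*r22) * cnj (ip br a (NN X)) * ip br (br B X) (NN X)"
  by (simp only: ip_addL ip_diffL ip_scL T0[where B=B] K1[where a=a and X=X] K2[where a=a and X=X] K3[where X=X and V="br B X"] K4[where X=X and V="br B X"] K5[where X=X and a=a and V="br B X"] K6[where X=X and a=a and V="br B X"])

end

theorem mainTheorem2:
  fixes br :: "'n::finite cvec \<Rightarrow> 'n cvec \<Rightarrow> 'n cvec"
    and \<sigma> :: "'n cvec \<Rightarrow> 'n cvec"
    and X :: "'n cvec"
    and \<rho> :: "real \<times> real \<Rightarrow> real"
    and \<rho>1 \<rho>2 \<rho>11 \<rho>12 \<rho>22 :: "real \<times> real \<Rightarrow> real"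
    and \<Omega> :: "(real \<times> real) set"
    and J :: "'n cvec \<Rightarrow> 'n cvec"
  assumes ss: "semisimple br"
    and sig: "compact_real_structure br \<sigma>"
    and nilp: "nilpotent_elt br X"
    and \<Omega>: "open \<Omega>" "(eta1 br \<sigma> X, eta2 br \<sigma> X) \<in> \<Omega>"
    and d\<rho>: "\<And>p. p \<in> \<Omega> \<Longrightarrow>
              (\<rho> has_derivative (\<lambda>(h, k). \<rho>1 p * h + \<rho>2 p * k)) (at p)"
    and d\<rho>1: "\<And>p. p \<in> \<Omega> \<Longrightarrow>
              (\<rho>1 has_derivative (\<lambda>(h, k). \<rho>11 p * h + \<rho>12 p * k)) (at p)"
    and d\<rho>2: "\<And>p. p \<in> \<Omega> \<Longrightarrow>
              (\<rho>2 has_derivative (\<lambda>(h, k). \<rho>12 p * h + \<rho>22 p * k)) (at p)"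
    and nondeg: "\<And>A. (\<forall>B. gmet br \<sigma> \<rho> X A B = 0) \<Longrightarrow> br A X = 0"
    and J_tangent: "\<And>A. \<exists>C. J (br A X) = br C X"
    and J_def: "\<And>A B C. J (br A X) = br C X \<Longrightarrow>
                  gmet br \<sigma> \<rho> X A B = Re (kks br X C B)"
  shows "\<forall>A. let p = (eta1 br \<sigma> X, eta2 br \<sigma> X); S = \<sigma> (br A X); sX = \<sigma> X in
     J (br A X) =
       complex_of_real (- 2 * \<rho>1 p) *s br X S
     + complex_of_real (4 * \<rho>2 p) *s (2 *s br X (br sX (br X S)) - br X (br X (br sX S)))
     - (complex_of_real (2 * \<rho>11 p) * ip br S X) *s br X sX
     + complex_of_real (4 * \<rho>12 p) *s
         (ip br S (br X (br sX X)) *s br X sX + ip br S X *s br X (br sX (br X sX)))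
     - (complex_of_real (8 * \<rho>22 p) * ip br S (br X (br sX X))) *s br X (br sX (br X sX))"
proof -
  interpret LA br \<sigma> using ss sig by unfold_locales (auto simp: semisimple_def)
  show ?thesis
  proof (intro allI)
    fix A
    define p where "p = (eta1 br \<sigma> X, eta2 br \<sigma> X)"
    define a where "a = br A X"
    obtain C where JC: "J (br A X) = br C X" using J_tangent by blast
    define F where "F = complex_of_real (- 2 * \<rho>1 p) *s br X (\<sigma> a)
     + complex_of_real (4 * \<rho>2 p) *s (2 *s br X (br (\<sigma> X) (br X (\<sigma> a))) - br X (br X (br (\<sigma> X) (\<sigma> a))))
     - (complex_of_real (2 * \<rho>11 p) * ip br (\<sigma> a) X) *s br X (\<sigma> X)
     + complex_of_real (4 * \<rho>12 p) *s
         (ip br (\<sigma> a) (br X (br (\<sigma> X) X)) *s br X (\<sigma> X) + ip br (\<sigma> a) X *s br X (br (\<sigma> X) (br X (\<sigma> X))))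
     - (complex_of_real (8 * \<rho>22 p) * ip br (\<sigma> a) (br X (br (\<sigma> X) X))) *s br X (br (\<sigma> X) (br X (\<sigma> X)))"
    have key: "Re (ip br (br C X - F) B) = 0" for B
    proof -
      have g1: "gmet br \<sigma> \<rho> X A B = Re (kks br X C B)" by (rule J_def[OF JC])
      have "kks br X C B = ip br (br X C) B" by (simp add: kks_def ip_inv)
      also have "\<dots> = - ip br (br C X) B" by (simp add: br_anti[of C X] ip_negL)
      finally have g2: "kks br X C B = - ip br (br C X) B" .
      have iA: "br (\<i> *s A) X = \<i> *s a" by (simp add: a_def br_scL)
      have "gmet br \<sigma> \<rho> X A B = - (1/2) *
        (Gd X (\<rho>1 p) (\<rho>2 p) (\<rho>11 p) (\<rho>12 p) (\<rho>22 p) (br B X) (\<i> *s a)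
       - Gd X (\<rho>1 p) (\<rho>2 p) (\<rho>11 p) (\<rho>12 p) (\<rho>22 p) (\<i> *s a) (br B X))"
        using gmet_formula[OF \<Omega> d\<rho> d\<rho>1 d\<rho>2, of A B] unfolding p_def iA .
      also have "\<dots> = - Re (ip br F B)"
        unfolding lhs_alg F_def rhs_alg ..
      finally have "Re (kks br X C B) = - Re (ip br F B)" using g1 by simp
      with g2 show ?thesis by (simp add: ip_diffL)
    qed
    have "br C X - F = 0" by (rule ip_nondeg[OF key])
    hence "J (br A X) = F" using JC by simp
    thus "let p = (eta1 br \<sigma> X, eta2 br \<sigma> X); S = \<sigma> (br A X); sX = \<sigma> X in
     J (br A X) =
       complex_of_real (- 2 * \<rho>1 p) *s br X S
     + complex_of_real (4 * \<rho>2 p) *s (2 *s br X (br sX (br X S)) - br X (br X (br sX S)))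
     - (complex_of_real (2 * \<rho>11 p) * ip br S X) *s br X sX
     + complex_of_real (4 * \<rho>12 p) *s
         (ip br S (br X (br sX X)) *s br X sX + ip br S X *s br X (br sX (br X sX)))
     - (complex_of_real (8 * \<rho>22 p) * ip br S (br X (br sX X))) *s br X (br sX (br X sX))"
      unfolding Let_def F_def p_def a_def .
  qed
qed

end
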